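(* Let $p$ be an odd prime, $\xi$ a primitive $p$th root of unity, $0\neq n\in\mathbb Z$. Let $(\mathfrak a,a),(\mathfrak a,b)\in I$. Then $[\mathfrak a,a]=[\mathfrak a,b]$ if and only if $a/b\in N(\mathbb Z[1/n][\xi]^* )$.
   Context: $N(x)=x\overline x$ (bar = complex conjugation). $I$ is the set of pairs $(\mathfrak a,a)$ with $\mathfrak a\subseteq\mathbb Z[1/n][\xi]$ an ideal and $0\neq a\in\mathbb Z[1/n][\xi]$ with $\mathfrak a\overline{\mathfrak a}=(a)$; $[\mathfrak a,a]=[\mathfrak b,b]$ means there exist nonzero $\lambda,\mu\in\mathbb Z[1/n][\xi]$ with $\lambda\mathfrak a=\mu\mathfrak b$ and $\lambda\overline\lambda a=\mu\overline\mu b$. *)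

theory Defs
  imports Complex_Main "HOL-Computational_Algebra.Primes"
begin

definition Zxi :: "int \<Rightarrow> complex \<Rightarrow> complex set" where
  "Zxi n \<xi> = {x. \<exists>(k::nat) (N::nat) (c::nat \<Rightarrow> int).
      x = (\<Sum>i<N. of_int (c i) * \<xi> ^ i) / of_int n ^ k}"

definition is_ideal :: "complex set \<Rightarrow> complex set \<Rightarrow> bool" where
  "is_ideal R A \<longleftrightarrow> A \<subseteq> R \<and> 0 \<in> A \<and> (\<forall>x\<in>A. \<forall>y\<in>A. x + y \<in> A)
     \<and> (\<forall>x\<in>A. - x \<in> A) \<and> (\<forall>r\<in>R. \<forall>x\<in>A. r * x \<in> A)"

definition ideal_prod :: "complex set \<Rightarrow> complex set \<Rightarrow> complex set" where
  "ideal_prod A B = {x. \<exists>(N::nat) f g. (\<forall>i<N. f i \<in> A \<and> g i \<in> B) \<and> x = (\<Sum>i<N. f i * g i)}"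

definition principal :: "complex set \<Rightarrow> complex \<Rightarrow> complex set" where
  "principal R a = {a * r | r. r \<in> R}"

definition in_I :: "complex set \<Rightarrow> complex set \<Rightarrow> complex \<Rightarrow> bool" where
  "in_I R A a \<longleftrightarrow> is_ideal R A \<and> a \<in> R \<and> a \<noteq> 0 \<and>
     ideal_prod A (cnj ` A) = principal R a"

definition I_equiv :: "complex set \<Rightarrow> complex set \<Rightarrow> complex \<Rightarrow> complex set \<Rightarrow> complex \<Rightarrow> bool" where
  "I_equiv R A a B b \<longleftrightarrow> (\<exists>l\<in>R. \<exists>m\<in>R. l \<noteq> 0 \<and> m \<noteq> 0 \<and>
     (\<lambda>x. l * x) ` A = (\<lambda>x. m * x) ` B \<and> l * cnj l * a = m * cnj m * b)"

definition ring_units :: "complex set \<Rightarrow> complex set" where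
  "ring_units R = {u \<in> R. \<exists>v\<in>R. u * v = 1}"

definition norm_units :: "complex set \<Rightarrow> complex set" where
  "norm_units R = {u * cnj u | u. u \<in> ring_units R}"

end

theory Submission
  imports Defs
begin

lemma one_Zxi: "1 \<in> Zxi n \<xi>"
  unfolding Zxi_def
  by (rule CollectI, rule exI[of _ 0], rule exI[of _ 1], rule exI[of _ "\<lambda>_. 1"]) simp

lemma key:
  assumes I: "in_I R A a" and one: "1 \<in> R"
    and eq: "(\<lambda>x. l * x) ` A = (\<lambda>x. m * x) ` A" and m0: "m \<noteq> 0"
  shows "\<exists>r\<in>R. l = m * r"
proof -
  have "a \<in> principal R a" using one unfolding principal_def by force
  hence "a \<in> ideal_prod A (cnj ` A)" using I unfolding in_I_def by simp
  then obtain N :: nat and f g where fg: "\<forall>i<N. f i \<in> A \<and> g i \<in> cnj ` A" and a: "a = (\<Sum>i<N. f i * g i)"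
    unfolding ideal_prod_def by blast
  have "\<forall>i. \<exists>h. i < N \<longrightarrow> h \<in> A \<and> l * f i = m * h"
  proof
    fix i
    show "\<exists>h. i < N \<longrightarrow> h \<in> A \<and> l * f i = m * h"
    proof (cases "i < N")
      case True
      hence "l * f i \<in> (\<lambda>x. m * x) ` A" using fg eq by blast
      thus ?thesis by blast
    qed auto
  qed
  then obtain h where h: "\<And>i. i < N \<Longrightarrow> h i \<in> A \<and> l * f i = m * h i" by metis
  have "(\<Sum>i<N. h i * g i) \<in> ideal_prod A (cnj ` A)"
    unfolding ideal_prod_def using h fg by blast
  hence "(\<Sum>i<N. h i * g i) \<in> principal R a" using I unfolding in_I_def by simp
  then obtain r where r: "r \<in> R" "(\<Sum>i<N. h i * g i) = a * r" unfolding principal_def by blast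
  have "l * a = (\<Sum>i<N. (l * f i) * g i)" unfolding a by (simp add: sum_distrib_left mult.assoc)
  also have "\<dots> = (\<Sum>i<N. m * (h i * g i))" using h by (simp add: mult.assoc)
  also have "\<dots> = m * (a * r)" using r(2) by (simp add: sum_distrib_left[symmetric])
  finally have "l * a = m * r * a" by simp
  moreover have "a \<noteq> 0" using I unfolding in_I_def by simp
  ultimately have "l = m * r" by simp
  thus ?thesis using r by blast
qed

theorem lemma3p9:
  fixes p :: nat and \<xi> :: complex and n :: int and A :: "complex set" and a b :: complex
  assumes "prime p" and "odd p"
    and "\<xi> ^ p = 1" and "\<forall>k. 0 < k \<and> k < p \<longrightarrow> \<xi> ^ k \<noteq> 1"
    and "n \<noteq> 0"
    and "in_I (Zxi n \<xi>) A a" and "in_I (Zxi n \<xi>) A b"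
  shows "I_equiv (Zxi n \<xi>) A a A b \<longleftrightarrow> a / b \<in> norm_units (Zxi n \<xi>)"
proof
  let ?R = "Zxi n \<xi>"
  have one: "1 \<in> ?R" by (rule one_Zxi)
  have b0: "b \<noteq> 0" using assms(7) unfolding in_I_def by simp
  have idl: "is_ideal ?R A" using assms(6) unfolding in_I_def by simp
  {
    assume "I_equiv ?R A a A b"
    then obtain l m where lm: "l \<in> ?R" "m \<in> ?R" "l \<noteq> 0" "m \<noteq> 0"
      "(\<lambda>x. l * x) ` A = (\<lambda>x. m * x) ` A" "l * cnj l * a = m * cnj m * b"
      unfolding I_equiv_def by blast
    obtain r where r: "r \<in> ?R" "l = m * r" using key[OF assms(6) one lm(5) lm(4)] by blast
    obtain s where s: "s \<in> ?R" "m = l * s" using key[OF assms(6) one lm(5)[symmetric] lm(3)] by blast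
    have "l = m * r" by (rule r(2))
    also have "\<dots> = l * s * r" by (simp only: s(2))
    finally have "l = l * (s * r)" by (simp only: mult.assoc)
    hence sr: "s * r = 1" using lm(3) by simp
    hence su: "s \<in> ring_units ?R" unfolding ring_units_def using s r by blast
    have "l * cnj l * a = l * cnj l * (s * cnj s * b)"
      using lm(6) s(2) by (simp add: mult_ac)
    hence "a = s * cnj s * b" using lm(3) by simp
    hence "a / b = s * cnj s" using b0 by simp
    thus "a / b \<in> norm_units ?R" unfolding norm_units_def using su by blast
  }
  {
    assume "a / b \<in> norm_units ?R"
    then obtain u v where u: "u \<in> ?R" "v \<in> ?R" "u * v = 1" "a / b = u * cnj u"
      unfolding norm_units_def ring_units_def by blast
    have u0: "u \<noteq> 0" using u(3) by auto
    have "(\<lambda>x. 1 * x) ` A = (\<lambda>x. u * x) ` A"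
    proof
      show "(\<lambda>x. 1 * x) ` A \<subseteq> (\<lambda>x. u * x) ` A"
      proof
        fix y assume "y \<in> (\<lambda>x. 1 * x) ` A"
        hence y: "y \<in> A" by simp
        have "v * y \<in> A" using idl u(2) y unfolding is_ideal_def by blast
        moreover have "y = u * (v * y)" using u(3) by (simp add: mult.assoc[symmetric])
        ultimately show "y \<in> (\<lambda>x. u * x) ` A" by blast
      qed
      show "(\<lambda>x. u * x) ` A \<subseteq> (\<lambda>x. 1 * x) ` A"
      proof
        fix y assume "y \<in> (\<lambda>x. u * x) ` A"
        then obtain x where x: "x \<in> A" "y = u * x" by blast
        have "u * x \<in> A" using idl u(1) x(1) unfolding is_ideal_def by blast
        thus "y \<in> (\<lambda>x. 1 * x) ` A" using x(2) by (metis image_eqI mult_1)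
      qed
    qed
    moreover have "a = (a / b) * b" using b0 by simp
    hence "1 * cnj 1 * a = u * cnj u * b" using u(4) by simp
    ultimately show "I_equiv ?R A a A b" unfolding I_equiv_def
      using one u(1) u0 by (intro bexI[of _ 1] bexI[of _ u]) auto
  }
qed

end
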